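(* Let $n \geq 1$. For each $j \in \{0, 1, \ldots, n\}$, let $N_j$ be the number of permutations $w \in S_{2n+1}$ with exactly $n$ descents such that ${\rm exc}(L(w)) = j$. Then $N_0 = N_1 = \cdots = N_n$. As a consequence, the number of Dyck permutations $w \in S_{2n+1}$ equals the Eulerian-Catalan number $EC_n = \frac{1}{n+1} A_{n,2n+1}$.
   Context: $A_{m,n}$ denotes the Eulerian number: the number of permutations of $[n]$ with exactly $m$ descents (a descent of $w = w_1\cdots w_n$ is an index $i$ with $w_i > w_{i+1}$). The Eulerian-Catalan number is $EC_n = \frac{1}{n+1}A_{n,2n+1}$. For a permutation $w = w_1 \cdots w_m$, $L(w)$ is the lattice path starting at $(0,0)$ with $m-1$ steps, the $i$-th step being $(1,0)$ if $w_i < w_{i+1}$ (ascent) and $(0,1)$ if $w_i > w_{i+1}$ (descent). For $w \in S_{2n+1}$ with $n$ descents, $L(w)$ goes from $(0,0)$ to $(n,n)$. For a lattice path $L$ from $(0,0)$ to $(n,n)$ with unit steps $(1,0)$ and $(0,1)$, its exceedance ${\rm exc}(L)$ is the number of $i \in \{0,\ldots,n\}$ such that $L$ contains a point $(i,i')$ with $i < i'$. A permutation $w \in S_{2n+1}$ is a Dyck permutation if $L(w)$ is a lattice path from $(0,0)$ to $(n,n)$ all of whose points satisfy $y \leq x$. *)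

theory Defs
  imports "HOL-Combinatorics.Multiset_Permutations"
begin

text \<open>Permutations of [m] = {1..m} are represented in one-line notation as lists
  w = [w_1, ..., w_m] (list index i corresponds to position i+1).\<close>

definition perms :: "nat \<Rightarrow> nat list set" where
  "perms m = permutations_of_set {1..m}"

definition des :: "nat list \<Rightarrow> nat" where
  "des w = card {i. Suc i < length w \<and> w ! i > w ! Suc i}"

definition eulerian :: "nat \<Rightarrow> nat \<Rightarrow> nat" where
  "eulerian m n = card {w \<in> perms n. des w = m}"

text \<open>A lattice path with unit steps is a list of steps; True = (1,0), False = (0,1).\<close>
definition lpath :: "nat list \<Rightarrow> bool list" where
  "lpath w = map (\<lambda>i. w ! i < w ! Suc i) [0..<length w - 1]"

definition path_points :: "bool list \<Rightarrow> (nat \<times> nat) set" where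
  "path_points s = {(length (filter id (take k s)), length (filter Not (take k s))) | k. k \<le> length s}"

definition exc :: "nat \<Rightarrow> bool list \<Rightarrow> nat" where
  "exc n s = card {i \<in> {0..n}. \<exists>i'. (i, i') \<in> path_points s \<and> i < i'}"

definition dyck_perm :: "nat \<Rightarrow> nat list \<Rightarrow> bool" where
  "dyck_perm n w \<longleftrightarrow> w \<in> perms (2*n+1) \<and> des w = n \<and>
     (\<forall>(x, y) \<in> path_points (lpath w). y \<le> x)"

definition N :: "nat \<Rightarrow> nat \<Rightarrow> nat" where
  "N n j = card {w \<in> perms (2*n+1). des w = n \<and> exc n (lpath w) = j}"

end

theory Submission
  imports Defs
begin

lemma len_filter_rotate: "length (filter p (rotate k xs)) = length (filter p xs)"
proof -
  have "length (filter p xs) = length (filter p (take (k mod length xs) xs)) + length (filter p (drop (k mod length xs) xs))"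
    by (metis append_take_drop_id filter_append length_append)
  then show ?thesis by (simp add: rotate_drop_take)
qed

definition A :: "bool list \<Rightarrow> nat \<Rightarrow> nat" where "A P k = length (filter id (take k P))"
definition D :: "bool list \<Rightarrow> nat \<Rightarrow> nat" where "D P k = length (filter Not (take k P))"

lemma filter_take_mono: "k \<le> j \<Longrightarrow> length (filter p (take k P)) \<le> length (filter p (take j P))"
proof -
  assume "k \<le> j"
  then have "take j P = take k P @ take (j - k) (drop k P)"
    by (metis le_add_diff_inverse take_add)
  then show ?thesis by simp
qed

lemma A_mono: "k \<le> j \<Longrightarrow> A P k \<le> A P j" unfolding A_def by (rule filter_take_mono)
lemma D_mono: "k \<le> j \<Longrightarrow> D P k \<le> D P j" unfolding D_def by (rule filter_take_mono)

lemma A_Suc: "k < length P \<Longrightarrow> A P (Suc k) = A P k + (if P!k then 1 else 0)"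
  unfolding A_def by (simp add: take_Suc_conv_app_nth)
lemma D_Suc: "k < length P \<Longrightarrow> D P (Suc k) = D P k + (if P!k then 0 else 1)"
  unfolding D_def by (simp add: take_Suc_conv_app_nth)

lemma find_true:
  assumes "k \<le> j" "j \<le> length P" "A P k < A P j"
  shows "\<exists>p. k \<le> p \<and> p < j \<and> P!p \<and> A P p = A P k \<and> D P k \<le> D P p"
  using assms
proof (induction j)
  case 0 then show ?case by simp
next
  case (Suc j)
  show ?case
  proof (cases "k = Suc j")
    case True then show ?thesis using Suc by simp
  next
    case False
    then have kj: "k \<le> j" using Suc by simp
    show ?thesis
    proof (cases "A P k < A P j")
      case True then show ?thesis using Suc kj by fastforce
    next
      case False
      then have e: "A P k = A P j" using A_mono[OF kj, of P] by simp
      then have "P!j" using Suc A_Suc[of j P] by (auto split: if_splits)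
      then show ?thesis using e D_mono[OF kj, of P] kj by (intro exI[of _ j]) auto
    qed
  qed
qed

lemma A_len: "A P (length P) = length (filter id P)" by (simp add: A_def)
lemma D_len: "D P (length P) = length (filter Not P)" by (simp add: D_def)

lemma exc_char:
  assumes "length (filter id P) = n" "length (filter Not P) = n"
  shows "exc n P = card {k. k < length P \<and> P!k \<and> A P k < D P k}"
proof -
  let ?X = "{i \<in> {0..n}. \<exists>i'. (i, i') \<in> path_points P \<and> i < i'}"
  let ?Y = "{k. k < length P \<and> P!k \<and> A P k < D P k}"
  have pp: "path_points P = {(A P k, D P k) | k. k \<le> length P}"
    unfolding path_points_def A_def D_def by simp
  have inj: "inj_on (A P) ?Y"
  proof (rule inj_onI)
    fix x y assume x: "x \<in> ?Y" and y: "y \<in> ?Y" and e: "A P x = A P y"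
    show "x = y"
    proof (rule ccontr)
      assume "x \<noteq> y"
      then consider "x < y" | "y < x" by linarith
      then show False
      proof cases
        case 1
        have "A P (Suc x) \<le> A P y" using 1 by (intro A_mono) simp
        then show False using A_Suc[of x P] x e by simp
      next
        case 2
        have "A P (Suc y) \<le> A P x" using 2 by (intro A_mono) simp
        then show False using A_Suc[of y P] y e by simp
      qed
    qed
  qed
  have img: "A P ` ?Y = ?X"
  proof
    show "A P ` ?Y \<subseteq> ?X"
    proof
      fix a assume "a \<in> A P ` ?Y"
      then obtain k where k: "k \<in> ?Y" "a = A P k" by blast
      have "A P k \<le> A P (length P)" using k by (intro A_mono) simp
      then have "a \<le> n" using k assms A_len by simp
      moreover have "(A P k, D P k) \<in> path_points P" using pp k by auto
      ultimately show "a \<in> ?X" using k by auto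
    qed
  next
    show "?X \<subseteq> A P ` ?Y"
    proof
      fix a assume "a \<in> ?X"
      then obtain i' where "(a, i') \<in> path_points P" "a < i'" by blast
      then obtain k where k: "k \<le> length P" "a = A P k" "i' = D P k" using pp by auto
      have "D P k \<le> D P (length P)" using k by (intro D_mono) simp
      then have "A P k < A P (length P)" using k \<open>a < i'\<close> assms A_len D_len by simp
      then obtain p where p: "k \<le> p" "p < length P" "P!p" "A P p = A P k" "D P k \<le> D P p"
        using find_true[of k "length P" P] k by auto
      then have "p \<in> ?Y" using k \<open>a < i'\<close> by auto
      then show "a \<in> A P ` ?Y" using p k by (intro image_eqI[of _ _ p]) auto
    qed
  qed
  have "card ?X = card ?Y" using card_image[OF inj] img by simp
  then show ?thesis unfolding exc_def by simp
qed

definition val :: "bool \<Rightarrow> int" where "val b = (if b then -1 else 1)"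

lemma height: "i \<le> length P \<Longrightarrow> int (D P i) - int (A P i) = (\<Sum>x<i. val (P!x))"
proof (induction i)
  case 0 then show ?case by (simp add: A_def D_def)
next
  case (Suc i)
  then have "i < length P" by simp
  then show ?case using Suc A_Suc[of i P] D_Suc[of i P] by (simp add: val_def)
qed

lemma A_app: "i \<le> length P \<Longrightarrow> A (P @ Q) i = A P i" by (simp add: A_def)
lemma D_app: "i \<le> length P \<Longrightarrow> D (P @ Q) i = D P i" by (simp add: D_def)

lemma crossing:
  "int (card {i. i < length P \<and> \<not> P!i \<and> A P i \<le> D P i}) - int (card {i. i < length P \<and> P!i \<and> A P i < D P i})
   = max 0 (int (D P (length P)) - int (A P (length P)))"
proof (induction P rule: rev_induct)
  case Nil then show ?case by (simp add: A_def D_def)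
next
  case (snoc b P)
  let ?l = "length P"
  let ?P' = "P @ [b]"
  have e1: "{i. i < length ?P' \<and> \<not> ?P'!i \<and> A ?P' i \<le> D ?P' i} =
     {i. i < ?l \<and> \<not> P!i \<and> A P i \<le> D P i} \<union> (if \<not> b \<and> A P ?l \<le> D P ?l then {?l} else {})"
    by (auto simp: A_app D_app nth_append less_Suc_eq)
  have e2: "{i. i < length ?P' \<and> ?P'!i \<and> A ?P' i < D ?P' i} =
     {i. i < ?l \<and> P!i \<and> A P i < D P i} \<union> (if b \<and> A P ?l < D P ?l then {?l} else {})"
    by (auto simp: A_app D_app nth_append less_Suc_eq)
  have c1: "card {i. i < length ?P' \<and> \<not> ?P'!i \<and> A ?P' i \<le> D ?P' i} =
     card {i. i < ?l \<and> \<not> P!i \<and> A P i \<le> D P i} + (if \<not> b \<and> A P ?l \<le> D P ?l then 1 else 0)"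
    unfolding e1 by (auto simp: card_insert_if)
  have c2: "card {i. i < length ?P' \<and> ?P'!i \<and> A ?P' i < D ?P' i} =
     card {i. i < ?l \<and> P!i \<and> A P i < D P i} + (if b \<and> A P ?l < D P ?l then 1 else 0)"
    unfolding e2 by (auto simp: card_insert_if)
  have a: "A ?P' (length ?P') = A P ?l + (if b then 1 else 0)" by (simp add: A_def)
  have d: "D ?P' (length ?P') = D P ?l + (if b then 0 else 1)" by (simp add: D_def)
  show ?case using snoc.IH unfolding c1 c2 a d by auto
qed

lemma exc_char2:
  assumes "length (filter id P) = n" "length (filter Not P) = n"
  shows "exc n P = card {k. k < length P \<and> \<not> P!k \<and> A P k \<le> D P k}"
  using exc_char[OF assms] crossing[of P] assms A_len D_len by simp

definition phi :: "bool list \<Rightarrow> nat \<Rightarrow> int" where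
  "phi c j = (\<Sum>x<j. val (c!(x mod length c)))"

lemma phi_add: "phi c (a + i) = phi c a + (\<Sum>x<i. val (c!((a + x) mod length c)))"
  by (induction i) (auto simp: phi_def)

lemma phi_Suc: "phi c (Suc r) = phi c r + val (c!(r mod length c))"
  by (simp add: phi_def)

lemma phi_period: "0 < length c \<Longrightarrow> phi c (length c + j) = phi c (length c) + phi c j"
  using phi_add[of c "length c" j] by (simp add: phi_def)

lemma phi_len: "phi c (length c) = int (length (filter Not c)) - int (length (filter id c))"
proof -
  have "phi c (length c) = (\<Sum>x<length c. val (c!x))" unfolding phi_def
    by (rule sum.cong) auto
  also have "\<dots> = int (D c (length c)) - int (A c (length c))" using height[of "length c" c] by simp
  finally show ?thesis by (simp add: A_len D_len)
qed

lemma shift_card: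
  assumes "r < Suc m" "\<not> Q r"
  shows "card {i. i < m \<and> Q ((Suc r + i) mod Suc m)} = card {j. j < Suc m \<and> Q j}"
proof -
  define f where "f i = (Suc r + i) mod Suc m" for i
  have inj: "inj_on f {..<m}"
  proof (rule inj_onI)
    fix x y assume "x \<in> {..<m}" "y \<in> {..<m}" "f x = f y"
    moreover have "\<And>z. z < m \<Longrightarrow> f z = (if Suc r + z < Suc m then Suc r + z else Suc r + z - Suc m)"
      unfolding f_def using assms by (auto simp: mod_if)
    ultimately show "x = y" by (auto split: if_splits)
  qed
  have img: "f ` {..<m} = {..<Suc m} - {r}"
  proof
    show "f ` {..<m} \<subseteq> {..<Suc m} - {r}"
    proof
      fix j assume "j \<in> f ` {..<m}"
      then obtain i where i: "i < m" "j = f i" by auto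
      have "j \<noteq> r"
      proof
        assume "j = r"
        show False
        proof (cases "Suc r + i < Suc m")
          case True then show False using i \<open>j = r\<close> by (simp add: f_def)
        next
          case False
          then have ge: "Suc m \<le> Suc r + i" by simp
          then have "f i = Suc r + i - Suc m" unfolding f_def using assms i
            by (simp add: mod_if)
          then show False using i \<open>j = r\<close> ge by linarith
        qed
      qed
      then show "j \<in> {..<Suc m} - {r}" using i by (simp add: f_def)
    qed
  next
    show "{..<Suc m} - {r} \<subseteq> f ` {..<m}"
    proof
      fix j assume j: "j \<in> {..<Suc m} - {r}"
      show "j \<in> f ` {..<m}"
      proof (cases "r < j")
        case True
        then have "f (j - Suc r) = j" using j by (simp add: f_def)
        moreover have "j - Suc r < m" using j True by auto
        ultimately show ?thesis by (metis lessThan_iff rev_image_eqI)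
      next
        case False
        then have jr: "j < r" using j by auto
        have "Suc r + (j + Suc m - Suc r) = j + Suc m" using assms by simp
        then have "f (j + Suc m - Suc r) = (j + Suc m) mod Suc m" unfolding f_def by presburger
        also have "\<dots> = j" using j by (subst mod_add_self2) simp
        finally have "f (j + Suc m - Suc r) = j" .
        moreover have "j + Suc m - Suc r < m" using jr assms by auto
        ultimately show ?thesis by (metis lessThan_iff rev_image_eqI)
      qed
    qed
  qed
  have "{i. i < m \<and> Q (f i)} = {i \<in> {..<m}. Q (f i)}" by auto
  then have "f ` {i. i < m \<and> Q (f i)} = {j \<in> f ` {..<m}. Q j}" by auto
  also have "\<dots> = {j. j < Suc m \<and> Q j}" using img assms by auto
  finally have "f ` {i. i < m \<and> Q (f i)} = {j. j < Suc m \<and> Q j}" .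
  moreover have "inj_on f {i. i < m \<and> Q (f i)}" using inj by (rule inj_on_subset) auto
  ultimately have "card {i. i < m \<and> Q (f i)} = card {j. j < Suc m \<and> Q j}"
    using card_image by fastforce
  then show ?thesis unfolding f_def .
qed

definition gt :: "bool \<Rightarrow> bool list \<Rightarrow> nat \<Rightarrow> nat \<Rightarrow> bool" where
  "gt t c a b = (phi c b < phi c a \<or> (phi c a = phi c b \<and> (if t then b < a else a < b)))"

lemma W:
  fixes c :: "bool list" and n r :: nat
  assumes L: "length c = Suc (2*n)" and cnt: "length (filter (\<lambda>b. b = c!(2*n)) c) = Suc n"
    and r: "r < Suc (2*n)" "c!r = c!(2*n)"
  shows "length (filter id (take (2*n) (rotate (Suc r) c))) = n \<and>
         length (filter Not (take (2*n) (rotate (Suc r) c))) = n \<and>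
         exc n (take (2*n) (rotate (Suc r) c)) =
           card {j. j < Suc (2*n) \<and> c!j = c!(2*n) \<and> gt (c!(2*n)) c j r}"
proof -
  define t where "t = c!(2*n)"
  define P where "P = take (2*n) (rotate (Suc r) c)"
  define R where "R = rotate (Suc r) c"
  define f where "f i = (Suc r + i) mod Suc (2*n)" for i
  have lR: "length R = Suc (2*n)" using L by (simp add: R_def)
  have Rlast: "R!(2*n) = c!r"
  proof -
    have "R!(2*n) = c!((Suc r + 2*n) mod Suc (2*n))" unfolding R_def using L nth_rotate[of "2*n" c "Suc r"] by simp
    also have "(Suc r + 2*n) mod Suc (2*n) = r"
    proof -
      have "Suc r + 2*n = r + Suc (2*n)" by simp
      then show ?thesis using r by (metis mod_add_self2 mod_less)
    qed
    finally show ?thesis .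
  qed
  have RP: "R = P @ [c!r]"
  proof -
    have "take (Suc (2*n)) R = take (2*n) R @ [R!(2*n)]"
      by (rule take_Suc_conv_app_nth) (simp add: lR)
    then show ?thesis using lR Rlast unfolding P_def R_def[symmetric] by simp
  qed
  have lP: "length P = 2*n" using lR RP by simp
  have Pnth: "P!i = c!(f i)" if "i < 2*n" for i
    using that L nth_rotate[of i c "Suc r"] unfolding P_def f_def by simp
  have tot: "length (filter id c) + length (filter Not c) = Suc (2*n)"
    using sum_length_filter_compl[of id c] L by simp
  have fR: "length (filter p R) = length (filter p c)" for p unfolding R_def by (rule len_filter_rotate)
  have cT: "length (filter id c) = (if t then Suc n else n)"
    and cF: "length (filter Not c) = (if t then n else Suc n)"
  proof -
    have "filter (\<lambda>b. b = t) c = (if t then filter id c else filter Not c)"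
      by (cases t) (auto intro: filter_cong)
    then show "length (filter id c) = (if t then Suc n else n)"
      and "length (filter Not c) = (if t then n else Suc n)"
      using cnt tot unfolding t_def by (auto split: if_splits)
  qed
  have PT: "length (filter id P) = n" and PF: "length (filter Not P) = n"
    using fR[of id] fR[of Not] cT cF RP r unfolding t_def by (auto split: if_splits)
  have phiL: "phi c (Suc (2*n)) = (if t then -1 else 1)"
    using phi_len[of c] cT cF L by auto
  have phiSr: "phi c (Suc r) = phi c r + (if t then -1 else 1)"
    using phi_Suc[of c r] r L unfolding t_def by (simp add: val_def)
  have hgt: "int (D P i) - int (A P i) = phi c (Suc r + i) - phi c (Suc r)" if "i < 2*n" for i
  proof -
    have "int (D P i) - int (A P i) = (\<Sum>x<i. val (P!x))" using height[of i P] that lP by simp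
    also have "\<dots> = (\<Sum>x<i. val (c!((Suc r + x) mod length c)))"
      using that Pnth L unfolding f_def by (intro sum.cong) auto
    finally show ?thesis using phi_add[of c "Suc r" i] by simp
  qed
  define Q where "Q j = (c!j = t \<and> gt t c j r)" for j
  have nQr: "\<not> Q r" unfolding Q_def gt_def by auto
  have key: "(if t then P!i \<and> A P i < D P i else \<not> P!i \<and> A P i \<le> D P i) = Q (f i)"
    if i: "i < 2*n" for i
  proof (cases "Suc r + i < Suc (2*n)")
    case True
    then have fi: "f i = Suc r + i" unfolding f_def by simp
    have "r < f i" using fi by simp
    then show ?thesis using hgt[OF i] Pnth[OF i] phiSr unfolding Q_def gt_def fi
      by (cases t) auto
  next
    case False
    define j where "j = Suc r + i - Suc (2*n)"
    have s: "Suc r + i = Suc (2*n) + j" using False unfolding j_def by simp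
    have jr: "j < r" using i False unfolding j_def by simp
    have fi: "f i = j" unfolding f_def s using jr r by (metis mod_add_self1 mod_less order.strict_trans)
    have ph: "phi c (Suc r + i) = phi c (Suc (2*n)) + phi c j"
      unfolding s using phi_period[of c j] L by simp
    show ?thesis using hgt[OF i] Pnth[OF i] phiSr ph phiL jr unfolding Q_def gt_def fi
      by (cases t) auto
  qed
  have ex: "exc n P = card {i. i < 2*n \<and> Q (f i)}"
  proof (cases t)
    case True
    then have "exc n P = card {k. k < length P \<and> P!k \<and> A P k < D P k}" using exc_char[OF PT PF] by simp
    also have "{k. k < length P \<and> P!k \<and> A P k < D P k} = {i. i < 2*n \<and> Q (f i)}"
      using key True lP by auto
    finally show ?thesis .
  next
    case False
    then have "exc n P = card {k. k < length P \<and> \<not> P!k \<and> A P k \<le> D P k}" using exc_char2[OF PT PF] by simp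
    also have "{k. k < length P \<and> \<not> P!k \<and> A P k \<le> D P k} = {i. i < 2*n \<and> Q (f i)}"
      using key False lP by auto
    finally show ?thesis .
  qed
  also have "\<dots> = card {j. j < Suc (2*n) \<and> Q j}"
    unfolding f_def by (rule shift_card[of r "2*n" Q, OF r(1) nQr])
  finally show ?thesis using PT PF unfolding P_def Q_def t_def by simp
qed

lemma gt_irrefl: "\<not> gt t c a a" unfolding gt_def by auto
lemma gt_trans: "gt t c a b \<Longrightarrow> gt t c b d \<Longrightarrow> gt t c a d" unfolding gt_def by (auto split: if_splits)
lemma gt_total: "a \<noteq> b \<Longrightarrow> gt t c a b \<or> gt t c b a" unfolding gt_def by (auto split: if_splits)

definition rk :: "bool list \<Rightarrow> nat \<Rightarrow> nat \<Rightarrow> nat" where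
  "rk c n r = card {j. j < Suc (2*n) \<and> c!j = c!(2*n) \<and> gt (c!(2*n)) c j r}"

lemma rk_less:
  assumes "r1 < Suc (2*n)" "c!r1 = c!(2*n)" "r2 < Suc (2*n)" "c!r2 = c!(2*n)" "gt (c!(2*n)) c r2 r1"
  shows "rk c n r2 < rk c n r1"
proof -
  let ?t = "c!(2*n)"
  have "insert r2 {j. j < Suc (2*n) \<and> c!j = ?t \<and> gt ?t c j r2} \<subseteq> {j. j < Suc (2*n) \<and> c!j = ?t \<and> gt ?t c j r1}"
    using assms gt_trans by blast
  moreover have "r2 \<notin> {j. j < Suc (2*n) \<and> c!j = ?t \<and> gt ?t c j r2}" using gt_irrefl by blast
  ultimately have "card (insert r2 {j. j < Suc (2*n) \<and> c!j = ?t \<and> gt ?t c j r2}) \<le> rk c n r1"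
    unfolding rk_def by (intro card_mono) auto
  then show ?thesis unfolding rk_def using \<open>r2 \<notin> _\<close> by simp
qed

lemma rk_inj:
  assumes "r1 < Suc (2*n)" "c!r1 = c!(2*n)" "r2 < Suc (2*n)" "c!r2 = c!(2*n)" "rk c n r1 = rk c n r2"
  shows "r1 = r2"
proof (rule ccontr)
  assume "r1 \<noteq> r2"
  then have "gt (c!(2*n)) c r2 r1 \<or> gt (c!(2*n)) c r1 r2" using gt_total by blast
  then show False using rk_less[of r1 n c r2] rk_less[of r2 n c r1] assms by auto
qed

lemma rk_surj:
  assumes cnt: "card {j. j < Suc (2*n) \<and> c!j = c!(2*n)} = Suc n" and k: "k \<le> n"
  shows "\<exists>r. r < Suc (2*n) \<and> c!r = c!(2*n) \<and> rk c n r = k"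
proof -
  let ?V = "{j. j < Suc (2*n) \<and> c!j = c!(2*n)}"
  have inj: "inj_on (rk c n) ?V" using rk_inj by (intro inj_onI) blast
  have sub: "rk c n ` ?V \<subseteq> {..n}"
  proof
    fix x assume "x \<in> rk c n ` ?V"
    then obtain r where r: "r \<in> ?V" "x = rk c n r" by blast
    have "{j. j < Suc (2*n) \<and> c!j = c!(2*n) \<and> gt (c!(2*n)) c j r} \<subseteq> ?V - {r}"
      using gt_irrefl by blast
    then have "x \<le> card (?V - {r})" unfolding r rk_def by (intro card_mono) auto
    also have "\<dots> = n" using r cnt by (simp add: card_Diff_singleton)
    finally show "x \<in> {..n}" by simp
  qed
  have "card (rk c n ` ?V) = Suc n" using card_image[OF inj] cnt by simp
  then have "rk c n ` ?V = {..n}" using sub by (intro card_subset_eq) auto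
  then have "k \<in> rk c n ` ?V" using k by auto
  then obtain r where "r \<in> ?V" "k = rk c n r" by (rule imageE)
  then show ?thesis by blast
qed

definition cyc :: "nat list \<Rightarrow> bool list" where
  "cyc w = map (\<lambda>i. w!i < w!(Suc i mod length w)) [0..<length w]"

lemma length_cyc[simp]: "length (cyc w) = length w" by (simp add: cyc_def)

lemma lpath_cyc: "lpath w = take (length w - 1) (cyc w)"
  unfolding lpath_def cyc_def by (intro nth_equalityI) auto

lemma cyc_rotate: "cyc (rotate k w) = rotate k (cyc w)"
proof (intro nth_equalityI)
  show "length (cyc (rotate k w)) = length (rotate k (cyc w))" by simp
next
  fix i assume "i < length (cyc (rotate k w))"
  then have i: "i < length w" by simp
  have "cyc (rotate k w) ! i = (rotate k w ! i < rotate k w ! (Suc i mod length w))"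
    using i by (simp add: cyc_def)
  also have "\<dots> = (w!((k + i) mod length w) < w!((k + Suc i mod length w) mod length w))"
  proof -
    have "Suc i mod length w < length w" using i by (intro mod_less_divisor) auto
    then show ?thesis using i by (simp add: nth_rotate)
  qed
  also have "(k + Suc i mod length w) mod length w = Suc ((k + i) mod length w) mod length w"
    by (simp add: mod_simps)
  also have "(w!((k + i) mod length w) < w!(Suc ((k + i) mod length w) mod length w)) = cyc w ! ((k + i) mod length w)"
  proof -
    have "(k + i) mod length w < length w" using i by (intro mod_less_divisor) auto
    then show ?thesis unfolding cyc_def by (simp del: upt_Suc)
  qed
  also have "\<dots> = rotate k (cyc w) ! i" using i by (simp add: nth_rotate)
  finally show "cyc (rotate k w) ! i = rotate k (cyc w) ! i" .
qed

lemma des_lpath: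
  assumes "distinct w"
  shows "des w = length (filter Not (lpath w))"
proof -
  have "length (filter Not (lpath w)) = card {i. i < length (lpath w) \<and> \<not> lpath w ! i}"
    by (rule length_filter_conv_card)
  also have "{i. i < length (lpath w) \<and> \<not> lpath w ! i} = {i. Suc i < length w \<and> w ! i > w ! Suc i}"
  proof -
    have "w!i \<noteq> w!Suc i" if "Suc i < length w" for i
      using assms that by (simp add: nth_eq_iff_index_eq)
    then have "(\<not> w!i < w!Suc i) = (w!Suc i < w!i)" if "Suc i < length w" for i
      using that by (meson linorder_neqE_nat order.asym)
    then show ?thesis unfolding lpath_def by (auto simp: less_diff_conv)
  qed
  finally show ?thesis unfolding des_def by simp
qed

lemma perms_iff: "w \<in> perms m \<longleftrightarrow> distinct w \<and> set w = {1..m}"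
  unfolding perms_def permutations_of_set_def by auto

lemma perms_length: "w \<in> perms m \<Longrightarrow> length w = m"
  unfolding perms_iff using distinct_card[of w] by auto

lemma perms_rotate: "w \<in> perms m \<Longrightarrow> rotate k w \<in> perms m"
  unfolding perms_iff by simp

declare rotate_Suc[simp del]

lemma split_last2n:
  assumes "length c = Suc (2*n)"
  shows "c = take (2*n) c @ [c!(2*n)]"
proof -
  have "take (Suc (2*n)) c = take (2*n) c @ [c!(2*n)]"
    by (rule take_Suc_conv_app_nth) (simp add: assms)
  then show ?thesis using assms by simp
qed

lemma count_t:
  assumes L: "length c = Suc (2*n)" and F: "length (filter Not (take (2*n) c)) = n"
  shows "length (filter (\<lambda>b. b = c!(2*n)) c) = Suc n"
proof -
  have T: "length (filter id (take (2*n) c)) = n"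
    using sum_length_filter_compl[of id "take (2*n) c"] F L by simp
  have "length (filter (\<lambda>b. b = c!(2*n)) c) = length (filter (\<lambda>b. b = c!(2*n)) (take (2*n) c)) + 1"
    by (subst split_last2n[OF L]) simp
  also have "length (filter (\<lambda>b. b = c!(2*n)) (take (2*n) c)) = n"
  proof (cases "c!(2*n)")
    case True
    have "filter (\<lambda>b. b = c!(2*n)) (take (2*n) c) = filter id (take (2*n) c)"
      using True by (intro filter_cong) auto
    then show ?thesis using T by simp
  next
    case False
    have "filter (\<lambda>b. b = c!(2*n)) (take (2*n) c) = filter Not (take (2*n) c)"
      using False by (intro filter_cong) auto
    then show ?thesis using F by simp
  qed
  finally show ?thesis by simp
qed

lemma valid_iff:
  assumes L: "length c = Suc (2*n)" and F: "length (filter Not (take (2*n) c)) = n"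
  shows "length (filter Not (take (2*n) (rotate k c))) = n \<longleftrightarrow> c!((k + 2*n) mod Suc (2*n)) = c!(2*n)"
proof -
  define R where "R = rotate k c"
  have lR: "length R = Suc (2*n)" using L by (simp add: R_def)
  have Rl: "R!(2*n) = c!((k + 2*n) mod Suc (2*n))" unfolding R_def using L nth_rotate[of "2*n" c k] by simp
  have fc: "length (filter Not c) = n + (if c!(2*n) then 0 else 1)"
    by (subst split_last2n[OF L]) (simp add: F)
  have fR: "length (filter Not R) = length (filter Not (take (2*n) R)) + (if R!(2*n) then 0 else 1)"
    by (subst split_last2n[OF lR]) simp
  have "length (filter Not R) = length (filter Not c)" unfolding R_def by (rule len_filter_rotate)
  then show ?thesis using fc fR Rl unfolding R_def[symmetric] by (auto split: if_splits)
qed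

definition Sset :: "nat \<Rightarrow> nat list set" where
  "Sset n = {w \<in> perms (2*n+1). des w = n}"

lemma des_rot:
  assumes "w \<in> perms (2*n+1)"
  shows "des (rotate k w) = length (filter Not (take (2*n) (rotate k (cyc w))))"
proof -
  have "rotate k w \<in> perms (2*n+1)" using assms by (rule perms_rotate)
  then have "distinct (rotate k w)" "length (rotate k w) = 2*n+1" using perms_iff perms_length by auto
  then show ?thesis using des_lpath lpath_cyc cyc_rotate by simp
qed

lemma des_self:
  assumes "w \<in> perms (2*n+1)"
  shows "des w = length (filter Not (take (2*n) (cyc w)))"
  using des_rot[OF assms, of 0] by simp

lemma lpath_rot:
  assumes "w \<in> perms (2*n+1)"
  shows "lpath (rotate k w) = take (2*n) (rotate k (cyc w))"
  using assms perms_length[OF perms_rotate[OF assms, of k]] lpath_cyc cyc_rotate by simp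

lemma exc_rot:
  assumes w: "w \<in> Sset n" and r: "r < Suc (2*n)" "cyc w ! r = cyc w ! (2*n)"
  shows "rotate (Suc r) w \<in> Sset n \<and> exc n (lpath (rotate (Suc r) w)) = rk (cyc w) n r"
proof -
  have wp: "w \<in> perms (2*n+1)" and dw: "des w = n" using w by (auto simp: Sset_def)
  have L: "length (cyc w) = Suc (2*n)" using perms_length[OF wp] by simp
  have F: "length (filter Not (take (2*n) (cyc w))) = n" using des_self[OF wp] dw by simp
  have W': "length (filter id (take (2*n) (rotate (Suc r) (cyc w)))) = n \<and>
         length (filter Not (take (2*n) (rotate (Suc r) (cyc w)))) = n \<and>
         exc n (take (2*n) (rotate (Suc r) (cyc w))) = rk (cyc w) n r"
    using W[OF L count_t[OF L F] r] unfolding rk_def .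
  show ?thesis using W' des_rot[OF wp] lpath_rot[OF wp] perms_rotate[OF wp] by (simp add: Sset_def)
qed

lemma exc_self:
  assumes w: "w \<in> Sset n"
  shows "exc n (lpath w) = rk (cyc w) n (2*n)"
proof -
  have "length w = Suc (2*n)" using w perms_length by (auto simp: Sset_def)
  then have "rotate (Suc (2*n)) w = w" using rotate_conv_mod[of "Suc (2*n)" w] by simp
  then show ?thesis using exc_rot[OF w, of "2*n"] by simp
qed

lemma rot_in_S:
  assumes w: "w \<in> Sset n" and wk: "rotate k w \<in> Sset n"
  shows "\<exists>r<Suc (2*n). cyc w ! r = cyc w ! (2*n) \<and> rotate k w = rotate (Suc r) w"
proof -
  have wp: "w \<in> perms (2*n+1)" and dw: "des w = n" using w by (auto simp: Sset_def)
  have lw: "length w = Suc (2*n)" using perms_length[OF wp] by simp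
  have L: "length (cyc w) = Suc (2*n)" using lw by simp
  have F: "length (filter Not (take (2*n) (cyc w))) = n" using des_self[OF wp] dw by simp
  have "length (filter Not (take (2*n) (rotate k (cyc w)))) = n"
    using wk des_rot[OF wp, of k] by (simp add: Sset_def)
  then have v: "cyc w ! ((k + 2*n) mod Suc (2*n)) = cyc w ! (2*n)" using valid_iff[OF L F] by simp
  define r where "r = (k + 2*n) mod Suc (2*n)"
  have "Suc r mod Suc (2*n) = k mod Suc (2*n)"
  proof -
    have "Suc r mod Suc (2*n) = Suc (k + 2*n) mod Suc (2*n)" unfolding r_def by (simp add: mod_Suc_eq)
    also have "Suc (k + 2*n) mod Suc (2*n) = k mod Suc (2*n)"
    proof -
      have "Suc (k + 2*n) = k + Suc (2*n)" by simp
      then show ?thesis by (simp only: mod_add_self2)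
    qed
    finally show ?thesis .
  qed
  then have "rotate k w = rotate (Suc r) w" using lw by (metis rotate_conv_mod)
  moreover have "r < Suc (2*n)" unfolding r_def by simp
  ultimately show ?thesis using v unfolding r_def by blast
qed

definition rotset :: "nat list \<Rightarrow> nat list set" where
  "rotset w = range (\<lambda>k. rotate k w)"

lemma rotset_rotate: "rotset (rotate m w) = rotset w"
proof (cases "w = []")
  case True then show ?thesis by (simp add: rotset_def)
next
  case False
  then have L: "length w > 0" by simp
  show ?thesis unfolding rotset_def
  proof
    show "range (\<lambda>k. rotate k (rotate m w)) \<subseteq> range (\<lambda>k. rotate k w)"
      by (auto simp: rotate_rotate)
  next
    show "range (\<lambda>k. rotate k w) \<subseteq> range (\<lambda>k. rotate k (rotate m w))"
    proof
      fix x assume "x \<in> range (\<lambda>k. rotate k w)"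
      then obtain k where x: "x = rotate k w" by blast
      have e: "k + (length w - 1) * m + m = k + length w * m"
        using L by (cases "length w") auto
      have "rotate (k + (length w - 1) * m) (rotate m w) = rotate (k + length w * m) w"
        unfolding rotate_rotate e ..
      also have "\<dots> = rotate ((k + length w * m) mod length w) w" by (rule rotate_conv_mod)
      also have "\<dots> = rotate (k mod length w) w" by simp
      also have "\<dots> = rotate k w" by (rule rotate_conv_mod[symmetric])
      finally show "x \<in> range (\<lambda>k. rotate k (rotate m w))" using x by (intro range_eqI[where x = "k + (length w - 1) * m"]) simp
    qed
  qed
qed

lemma in_rotset: "w \<in> rotset w" unfolding rotset_def using rangeI[of "\<lambda>k. rotate k w" 0] by simp

lemma N_eq:
  assumes "j \<le> n"
  shows "N n j = card (rotset ` Sset n)"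
proof -
  let ?Sj = "{w \<in> Sset n. exc n (lpath w) = j}"
  have NS: "N n j = card ?Sj" unfolding N_def Sset_def by (rule arg_cong[where f=card]) auto
  have inj: "inj_on rotset ?Sj"
  proof (rule inj_onI)
    fix w1 w2 assume w1: "w1 \<in> ?Sj" and w2: "w2 \<in> ?Sj" and e: "rotset w1 = rotset w2"
    have "w2 \<in> rotset w1" using e in_rotset by simp
    then obtain k where k: "w2 = rotate k w1" unfolding rotset_def by blast
    obtain r where r: "r < Suc (2*n)" "cyc w1 ! r = cyc w1 ! (2*n)" "w2 = rotate (Suc r) w1"
      using rot_in_S[of w1 n k] w1 w2 k by auto
    have "rk (cyc w1) n r = j" using exc_rot[of w1 n r] r w1 w2 by auto
    moreover have "rk (cyc w1) n (2*n) = j" using exc_self[of w1 n] w1 by auto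
    ultimately have "r = 2*n" using rk_inj[of r n "cyc w1" "2*n"] r by auto
    then have "w2 = rotate (Suc (2*n)) w1" using r by simp
    also have "\<dots> = w1"
    proof -
      have "length w1 = Suc (2*n)" using w1 perms_length by (auto simp: Sset_def)
      then show ?thesis using rotate_conv_mod[of "Suc (2*n)" w1] by simp
    qed
    finally show "w1 = w2" by simp
  qed
  have img: "rotset ` ?Sj = rotset ` Sset n"
  proof
    show "rotset ` ?Sj \<subseteq> rotset ` Sset n" by auto
  next
    show "rotset ` Sset n \<subseteq> rotset ` ?Sj"
    proof
      fix x assume "x \<in> rotset ` Sset n"
      then obtain w where w: "w \<in> Sset n" "x = rotset w" by blast
      have wp: "w \<in> perms (2*n+1)" and dw: "des w = n" using w by (auto simp: Sset_def)
      have L: "length (cyc w) = Suc (2*n)" using perms_length[OF wp] by simp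
      have F: "length (filter Not (take (2*n) (cyc w))) = n" using des_self[OF wp] dw by simp
      have cnt: "card {i. i < Suc (2*n) \<and> cyc w ! i = cyc w ! (2*n)} = Suc n"
        using count_t[OF L F] L by (simp add: length_filter_conv_card)
      obtain r where r: "r < Suc (2*n)" "cyc w ! r = cyc w ! (2*n)" "rk (cyc w) n r = j"
        using rk_surj[OF cnt assms] by blast
      have "rotate (Suc r) w \<in> ?Sj" using exc_rot[OF w(1) r(1,2)] r(3) by simp
      moreover have "rotset (rotate (Suc r) w) = x" using w rotset_rotate by simp
      ultimately show "x \<in> rotset ` ?Sj" by blast
    qed
  qed
  show ?thesis using NS card_image[OF inj] img by simp
qed

lemma rk_le:
  assumes cnt: "card {j. j < Suc (2*n) \<and> c!j = c!(2*n)} = Suc n" and r: "r < Suc (2*n)" "c!r = c!(2*n)"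
  shows "rk c n r \<le> n"
proof -
  let ?V = "{j. j < Suc (2*n) \<and> c!j = c!(2*n)}"
  have "{j. j < Suc (2*n) \<and> c!j = c!(2*n) \<and> gt (c!(2*n)) c j r} \<subseteq> ?V - {r}"
    using gt_irrefl by blast
  then have "rk c n r \<le> card (?V - {r})" unfolding rk_def by (intro card_mono) auto
  also have "\<dots> = n" using r cnt by (simp add: card_Diff_singleton)
  finally show ?thesis .
qed

lemma exc_le:
  assumes w: "w \<in> Sset n"
  shows "exc n (lpath w) \<le> n"
proof -
  have wp: "w \<in> perms (2*n+1)" and dw: "des w = n" using w by (auto simp: Sset_def)
  have L: "length (cyc w) = Suc (2*n)" using perms_length[OF wp] by simp
  have F: "length (filter Not (take (2*n) (cyc w))) = n" using des_self[OF wp] dw by simp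
  have cnt: "card {i. i < Suc (2*n) \<and> cyc w ! i = cyc w ! (2*n)} = Suc n"
    using count_t[OF L F] L by (simp add: length_filter_conv_card)
  show ?thesis using exc_self[OF w] rk_le[OF cnt, of "2*n"] by simp
qed

lemma dyck_iff:
  assumes w: "w \<in> Sset n"
  shows "(\<forall>(x, y) \<in> path_points (lpath w). y \<le> x) \<longleftrightarrow> exc n (lpath w) = 0"
proof -
  have wp: "w \<in> perms (2*n+1)" and dw: "des w = n" using w by (auto simp: Sset_def)
  have lw: "length w = Suc (2*n)" using perms_length[OF wp] by simp
  let ?P = "lpath w"
  have lP: "length ?P = 2*n" using lw by (simp add: lpath_def)
  have F: "length (filter Not ?P) = n" using des_lpath[of w] dw wp perms_iff by auto
  have T: "length (filter id ?P) = n" using sum_length_filter_compl[of id ?P] F lP by simp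
  have bnd: "x \<le> n" if xy: "(x, y) \<in> path_points ?P" for x y
  proof -
    obtain k where "x = length (filter id (take k ?P))" using xy unfolding path_points_def by blast
    also have "\<dots> \<le> length (filter id ?P)"
    proof -
      have "filter id ?P = filter id (take k ?P) @ filter id (drop k ?P)"
        by (metis append_take_drop_id filter_append)
      then show ?thesis by (metis le_add1 length_append)
    qed
    finally show ?thesis using T by simp
  qed
  let ?X = "{i \<in> {0..n}. \<exists>i'. (i, i') \<in> path_points ?P \<and> i < i'}"
  have fin: "finite ?X" by auto
  have "exc n ?P = 0 \<longleftrightarrow> ?X = {}" unfolding exc_def using fin by simp
  also have "\<dots> \<longleftrightarrow> (\<forall>(x, y) \<in> path_points ?P. y \<le> x)"
  proof
    assume e: "?X = {}"
    show "\<forall>(x, y) \<in> path_points ?P. y \<le> x"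
    proof (clarify)
      fix x y assume xy: "(x, y) \<in> path_points ?P"
      show "y \<le> x"
      proof (rule ccontr)
        assume "\<not> y \<le> x"
        then have "x \<in> ?X" using xy bnd[OF xy] by auto
        then show False using e by blast
      qed
    qed
  next
    assume a: "\<forall>(x, y) \<in> path_points ?P. y \<le> x"
    show "?X = {}"
    proof (rule ccontr)
      assume "?X \<noteq> {}"
      then obtain i i' where "(i, i') \<in> path_points ?P" "i < i'" by blast
      then show False using a by fastforce
    qed
  qed
  finally show ?thesis by simp
qed

theorem mainTheorem1:
  fixes n :: nat
  assumes "n \<ge> 1"
  shows "(\<forall>j \<in> {0..n}. N n j = N n 0) \<and>
         real (card {w. dyck_perm n w}) = real (eulerian n (2*n+1)) / real (n + 1)"
proof -
  have eq: "N n j = N n 0" if "j \<le> n" for j using N_eq[OF that] N_eq[of 0 n] by simp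
  let ?S = "\<lambda>j. {w \<in> Sset n. exc n (lpath w) = j}"
  have NS: "N n j = card (?S j)" for j unfolding N_def Sset_def by (rule arg_cong[where f=card]) auto
  have un: "Sset n = (\<Union>j\<in>{..n}. ?S j)"
  proof
    show "Sset n \<subseteq> (\<Union>j\<in>{..n}. ?S j)"
    proof
      fix w assume w: "w \<in> Sset n"
      then have "exc n (lpath w) \<in> {..n}" using exc_le[OF w] by simp
      then show "w \<in> (\<Union>j\<in>{..n}. ?S j)" using w by blast
    qed
  qed blast
  have finS: "finite (Sset n)" unfolding Sset_def perms_def by simp
  have "card (Sset n) = card (\<Union>j\<in>{..n}. ?S j)" using un by (rule arg_cong)
  also have "\<dots> = (\<Sum>j\<in>{..n}. card (?S j))"
  proof (rule card_UN_disjoint)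
    show "finite {..n}" by simp
    show "\<forall>i\<in>{..n}. finite (?S i)" using finS by simp
    show "\<forall>i\<in>{..n}. \<forall>j\<in>{..n}. i \<noteq> j \<longrightarrow> ?S i \<inter> ?S j = {}" by blast
  qed
  also have "\<dots> = (\<Sum>j\<in>{..n}. N n 0)"
  proof (rule sum.cong)
    fix j assume "j \<in> {..n}"
    then show "card (?S j) = N n 0" using eq[of j] NS[of j] by simp
  qed simp
  also have "\<dots> = (n+1) * N n 0" by simp
  finally have eul: "eulerian n (2*n+1) = (n+1) * N n 0"
    unfolding eulerian_def Sset_def by simp
  have "{w. dyck_perm n w} = ?S 0"
  proof (rule set_eqI)
    fix w
    show "w \<in> {w. dyck_perm n w} \<longleftrightarrow> w \<in> ?S 0"
    proof (cases "w \<in> Sset n")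
      case True
      then show ?thesis using dyck_iff[OF True] unfolding dyck_perm_def Sset_def by simp
    next
      case False
      then show ?thesis unfolding dyck_perm_def Sset_def by blast
    qed
  qed
  then have dy: "card {w. dyck_perm n w} = N n 0" using NS by simp
  have dv: "real (eulerian n (2*n+1)) / real (n + 1) = real (N n 0)"
  proof -
    have pos: "real (n + 1) \<noteq> 0" by simp
    have e: "real (eulerian n (2*n+1)) = real (n + 1) * real (N n 0)" unfolding eul by (rule of_nat_mult)
    show ?thesis unfolding e by (rule nonzero_mult_div_cancel_left[OF pos])
  qed
  have c1: "\<forall>j\<in>{0..n}. N n j = N n 0"
  proof
    fix j assume "j \<in> {0..n}"
    then show "N n j = N n 0" by (intro eq) simp
  qed
  show ?thesis
  proof (intro conjI)
    show "\<forall>j\<in>{0..n}. N n j = N n 0" by (rule c1)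
    show "real (card {w. dyck_perm n w}) = real (eulerian n (2*n+1)) / real (n + 1)"
      unfolding dy dv ..
  qed
qed

end
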